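(* Let $T=(V,E)$ be a tree with $\mathrm{pthin}(T)=2$, and let $\sigma$ be an ordering of $V$ and $S=\{V^0,V^1\}$ a partition of $V$ into two classes that are strongly consistent. Let $v\in V^0$ and let $w_1,w_2,w_3\in N(v)\cap V^1$ with $w_1<w_2<w_3$. Then $w_2$ has degree $1$ in $T$.
   Context: For a graph $G=(V,E)$, a linear ordering $<$ of $V$ and a partition of $V$ into classes are called strongly consistent if for every triple $r<s<t$ of vertices with $rt\in E$: if $r$ and $s$ belong to the same class then $st\in E$, and if $s$ and $t$ belong to the same class then $rs\in E$. The proper thinness $\mathrm{pthin}(G)$ is the minimum $k$ such that some ordering and some partition into $k$ classes are strongly consistent. $N(v)$ is the set of neighbors of $v$. *)

theory Defs
  imports Main "HOL-Library.Disjoint_Sets"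
begin

definition sgraph :: "'a set \<Rightarrow> ('a \<Rightarrow> 'a \<Rightarrow> bool) \<Rightarrow> bool" where
  "sgraph V E \<longleftrightarrow> finite V \<and> (\<forall>x y. E x y \<longrightarrow> x \<in> V \<and> y \<in> V)
     \<and> (\<forall>x y. E x y \<longrightarrow> E y x) \<and> (\<forall>x. \<not> E x x)"

definition is_walk :: "'a set \<Rightarrow> ('a \<Rightarrow> 'a \<Rightarrow> bool) \<Rightarrow> 'a list \<Rightarrow> bool" where
  "is_walk V E xs \<longleftrightarrow> xs \<noteq> [] \<and> set xs \<subseteq> V \<and>
     (\<forall>i. Suc i < length xs \<longrightarrow> E (xs ! i) (xs ! Suc i))"

definition connected_graph :: "'a set \<Rightarrow> ('a \<Rightarrow> 'a \<Rightarrow> bool) \<Rightarrow> bool" where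
  "connected_graph V E \<longleftrightarrow>
     (\<forall>x\<in>V. \<forall>y\<in>V. \<exists>xs. is_walk V E xs \<and> hd xs = x \<and> last xs = y)"

definition is_cycle :: "'a set \<Rightarrow> ('a \<Rightarrow> 'a \<Rightarrow> bool) \<Rightarrow> 'a list \<Rightarrow> bool" where
  "is_cycle V E xs \<longleftrightarrow> is_walk V E xs \<and> distinct xs \<and> length xs \<ge> 3 \<and> E (last xs) (hd xs)"

definition is_tree :: "'a set \<Rightarrow> ('a \<Rightarrow> 'a \<Rightarrow> bool) \<Rightarrow> bool" where
  "is_tree V E \<longleftrightarrow> sgraph V E \<and> V \<noteq> {} \<and> connected_graph V E \<and> (\<nexists>xs. is_cycle V E xs)"

definition neighbors :: "'a set \<Rightarrow> ('a \<Rightarrow> 'a \<Rightarrow> bool) \<Rightarrow> 'a \<Rightarrow> 'a set" where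
  "neighbors V E v = {u \<in> V. E v u}"

definition degree :: "'a set \<Rightarrow> ('a \<Rightarrow> 'a \<Rightarrow> bool) \<Rightarrow> 'a \<Rightarrow> nat" where
  "degree V E v = card (neighbors V E v)"

(* a linear ordering of V, given as a strict total order relation on V: (x,y) \<in> r means x < y *)
definition linear_ordering :: "'a set \<Rightarrow> ('a \<times> 'a) set \<Rightarrow> bool" where
  "linear_ordering V r \<longleftrightarrow> strict_linear_order_on V r \<and> r \<subseteq> V \<times> V"

definition same_class :: "'a set set \<Rightarrow> 'a \<Rightarrow> 'a \<Rightarrow> bool" where
  "same_class P x y \<longleftrightarrow> (\<exists>B\<in>P. x \<in> B \<and> y \<in> B)"

definition strongly_consistent ::
  "'a set \<Rightarrow> ('a \<Rightarrow> 'a \<Rightarrow> bool) \<Rightarrow> ('a \<times> 'a) set \<Rightarrow> 'a set set \<Rightarrow> bool" where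
  "strongly_consistent V E r P \<longleftrightarrow>
     (\<forall>x\<in>V. \<forall>s\<in>V. \<forall>t\<in>V. (x, s) \<in> r \<and> (s, t) \<in> r \<and> E x t \<longrightarrow>
        (same_class P x s \<longrightarrow> E s t) \<and> (same_class P s t \<longrightarrow> E x s))"

definition pthin :: "'a set \<Rightarrow> ('a \<Rightarrow> 'a \<Rightarrow> bool) \<Rightarrow> nat" where
  "pthin V E = (LEAST k. \<exists>r P. linear_ordering V r \<and> partition_on V P \<and> card P = k
                              \<and> strongly_consistent V E r P)"

end

theory Submission
  imports Defs
begin

theorem propositionA2:
  fixes V :: "'a set" and E :: "'a \<Rightarrow> 'a \<Rightarrow> bool" and \<sigma> :: "('a \<times> 'a) set"
    and V0 V1 :: "'a set" and v w1 w2 w3 :: 'a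
  assumes "is_tree V E"
    and "pthin V E = 2"
    and "linear_ordering V \<sigma>"
    and "partition_on V {V0, V1}" and "V0 \<noteq> V1"
    and "strongly_consistent V E \<sigma> {V0, V1}"
    and "v \<in> V0"
    and "w1 \<in> neighbors V E v \<inter> V1" and "w2 \<in> neighbors V E v \<inter> V1"
    and "w3 \<in> neighbors V E v \<inter> V1"
    and "(w1, w2) \<in> \<sigma>" and "(w2, w3) \<in> \<sigma>"
  shows "degree V E w2 = 1"
proof -
  have sg: "sgraph V E" and nocyc: "\<And>xs. \<not> is_cycle V E xs" using assms(1) unfolding is_tree_def by auto
  have inV: "\<And>x y. E x y \<Longrightarrow> x \<in> V \<and> y \<in> V" and sym: "\<And>x y. E x y \<Longrightarrow> E y x"
    and irr: "\<And>x. \<not> E x x" using sg unfolding sgraph_def by auto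
  have UV: "V = V0 \<union> V1" using assms(4) unfolding partition_on_def by auto
  have disj: "V0 \<inter> V1 = {}" using assms(4,5) unfolding partition_on_def disjoint_def by auto
  have sc: "\<And>x y. same_class {V0, V1} x y \<longleftrightarrow> (x \<in> V0 \<and> y \<in> V0) \<or> (x \<in> V1 \<and> y \<in> V1)"
    unfolding same_class_def by auto
  have lo: "trans \<sigma>" "irrefl \<sigma>" "total_on V \<sigma>" "\<sigma> \<subseteq> V \<times> V"
    using assms(3) unfolding linear_ordering_def strict_linear_order_on_def by auto
  have tot: "\<And>x y. x \<in> V \<Longrightarrow> y \<in> V \<Longrightarrow> x \<noteq> y \<Longrightarrow> (x, y) \<in> \<sigma> \<or> (y, x) \<in> \<sigma>"
    using lo(3) unfolding total_on_def by auto
  have tr: "\<And>x y z. (x, y) \<in> \<sigma> \<Longrightarrow> (y, z) \<in> \<sigma> \<Longrightarrow> (x, z) \<in> \<sigma>"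
    using lo(1) unfolding trans_def by blast
  have ir: "\<And>x. (x, x) \<notin> \<sigma>" using lo(2) unfolding irrefl_def by auto
  have SC0: "\<forall>x\<in>V. \<forall>s\<in>V. \<forall>t\<in>V. (x, s) \<in> \<sigma> \<and> (s, t) \<in> \<sigma> \<and> E x t \<longrightarrow>
        (same_class {V0, V1} x s \<longrightarrow> E s t) \<and> (same_class {V0, V1} s t \<longrightarrow> E x s)"
    using assms(6) unfolding strongly_consistent_def .
  have SC: "(same_class {V0, V1} a s \<longrightarrow> E s b) \<and> (same_class {V0, V1} s b \<longrightarrow> E a s)"
    if "(a, s) \<in> \<sigma>" "(s, b) \<in> \<sigma>" "E a b" for a s b
  proof -
    have h: "a \<in> V" "s \<in> V" "b \<in> V" using that lo(4) by auto
    have "(a, s) \<in> \<sigma> \<and> (s, b) \<in> \<sigma> \<and> E a b" using that by simp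
    with SC0 h show ?thesis by (meson)
  qed
  have span: "E a s \<or> E s b" if "E a b" "(a, s) \<in> \<sigma> \<and> (s, b) \<in> \<sigma> \<or> (b, s) \<in> \<sigma> \<and> (s, a) \<in> \<sigma>"
     "s \<in> V0 \<and> a \<in> V0 \<or> s \<in> V1 \<and> a \<in> V1 \<or> s \<in> V0 \<and> b \<in> V0 \<or> s \<in> V1 \<and> b \<in> V1" for a s b
  proof -
    have sc1: "same_class {V0, V1} a s \<or> same_class {V0, V1} s b" using that(3) unfolding sc by blast
    have sc2: "same_class {V0, V1} b s \<or> same_class {V0, V1} s a" using that(3) unfolding sc by blast
    have eba: "E b a" using sym that(1) .
    show ?thesis
    proof (cases "(a, s) \<in> \<sigma> \<and> (s, b) \<in> \<sigma>")
      case True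
      then have "(same_class {V0, V1} a s \<longrightarrow> E s b) \<and> (same_class {V0, V1} s b \<longrightarrow> E a s)"
        using SC that(1) by blast
      then show ?thesis using sc1 by blast
    next
      case False
      then have "(b, s) \<in> \<sigma> \<and> (s, a) \<in> \<sigma>" using that(2) by blast
      then have "(same_class {V0, V1} b s \<longrightarrow> E s a) \<and> (same_class {V0, V1} s a \<longrightarrow> E b s)"
        using SC eba by blast
      then have "E s a \<or> E b s" using sc2 by blast
      then show ?thesis using sym by blast
    qed
  qed
  have span2: "E a s \<or> E s b" if "E a b" "(a, s) \<in> \<sigma> \<and> (s, b) \<in> \<sigma> \<or> (b, s) \<in> \<sigma> \<and> (s, a) \<in> \<sigma>"
     "a \<in> V0" "b \<in> V1" "s \<in> V" for a s b
    using span[OF that(1,2)] that(3-5) UV by blast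
  have v: "v \<in> V" using assms(7) UV by auto
  have e1: "E v w1" and e2: "E v w2" and e3: "E v w3" and c1: "w1 \<in> V1" and c2: "w2 \<in> V1" and c3: "w3 \<in> V1"
    using assms(8-10) unfolding neighbors_def by auto
  have vw: "v \<noteq> w1" "v \<noteq> w2" "v \<noteq> w3" using irr e1 e2 e3 by auto
  have w12: "w1 \<noteq> w2" "w2 \<noteq> w3" "w1 \<noteq> w3" using assms(11,12) ir tr by blast+
  have tri: False if "E a b" "E b c" "E c a" for a b c
  proof -
    have "a \<noteq> b" "b \<noteq> c" "c \<noteq> a" using that irr by auto
    hence "is_cycle V E [a, b, c]" using that inV unfolding is_cycle_def is_walk_def
      by (auto simp: less_Suc_eq nth_Cons split: nat.splits)
    thus False using nocyc by blast
  qed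
  have quad: False if "E a b" "E b c" "E c d" "E d a" "a \<noteq> c" "b \<noteq> d" for a b c d
  proof -
    have "a \<noteq> b" "b \<noteq> c" "c \<noteq> d" "d \<noteq> a" using that irr by auto
    hence "is_cycle V E [a, b, c, d]" using that inV unfolding is_cycle_def is_walk_def
      by (auto simp: less_Suc_eq nth_Cons split: nat.splits)
    thus False using nocyc by blast
  qed
  have N: "neighbors V E w2 = {v}"
  proof (rule ccontr)
    assume "neighbors V E w2 \<noteq> {v}"
    moreover have "v \<in> neighbors V E w2" using e2 sym v unfolding neighbors_def by auto
    ultimately obtain u where eu: "E w2 u" and uv: "u \<noteq> v" unfolding neighbors_def by blast
    have uV: "u \<in> V" using inV eu by auto
    have nuv: "\<not> E u v" using tri[of u v w2] eu e2 sym by blast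
    have nu1: "\<not> E u w1"
    proof
      assume h: "E u w1"
      show False using quad[OF e1 sym[OF h] sym[OF eu] sym[OF e2]] uv w12(1) by metis
    qed
    have nu3: "\<not> E u w3"
    proof
      assume h: "E u w3"
      show False using quad[OF e3 sym[OF h] sym[OF eu] sym[OF e2]] uv w12(2) by metis
    qed
    have u1: "u \<noteq> w1"
    proof
      assume "u = w1"
      then have "E w1 w2" using eu sym by simp
      then show False using tri[OF e1 _ sym[OF e2]] by blast
    qed
    have u3: "u \<noteq> w3"
    proof
      assume "u = w3"
      then have "E w3 w2" using eu sym by simp
      then show False using tri[OF e3 _ sym[OF e2]] by blast
    qed
    have u2: "u \<noteq> w2" using eu irr by blast
    have w1V: "w1 \<in> V" "w3 \<in> V" using c1 c3 UV by auto
    show False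
    proof (cases "(u, w1) \<in> \<sigma>")
      case True
      have "E u w1 \<or> E w1 w2" using span[OF sym[OF eu], of w1] True assms(11) c1 c2 by blast
      thus False using nu1 tri[OF e1 _ sym[OF e2]] by blast
    next
      case F1: False
      hence uw1: "(w1, u) \<in> \<sigma>" using tot[OF uV w1V(1) u1] by blast
      show False
      proof (cases "(w3, u) \<in> \<sigma>")
        case True
        have "E w2 w3 \<or> E w3 u" using span[OF eu, of w3] True assms(12) c3 c2 by blast
        thus False using nu3 sym[of w3 u] tri[OF e2 _ sym[OF e3]] by blast
      next
        case False
        hence uw3: "(u, w3) \<in> \<sigma>" using tot[OF uV w1V(2) u3] by blast
        have "(v, u) \<in> \<sigma> \<or> (u, v) \<in> \<sigma>" using tot[OF v uV] uv by blast
        thus False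
        proof
          assume "(v, u) \<in> \<sigma>"
          hence "E v u \<or> E u w3" using span2[OF e3, of u] uw3 assms(7) c3 uV by blast
          thus False using nuv nu3 sym[of v u] by blast
        next
          assume "(u, v) \<in> \<sigma>"
          hence "E v u \<or> E u w1" using span2[OF e1, of u] uw1 assms(7) c1 uV by blast
          thus False using nuv nu1 sym[of v u] by blast
        qed
      qed
    qed
  qed
  show ?thesis unfolding degree_def N by simp
qed

end
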